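(* Let $\sigma$ be a finite Borel measure on $(-\pi,\pi)$ with $\sigma\perp\lambda$, and let $\sigma^\#=\sigma((-\pi,\pi))\,\delta_0$ be its symmetrization. Then $u_\sigma^\star(t)\le u_{\sigma^\#}^\star(t)$ for all $t\in[0,2\pi]$.
   Context: $\lambda$ is Lebesgue measure; $\delta_0$ the unit Dirac mass at $0$. $G(x,y)=-\frac{xy}{2\pi}-\frac12|x-y|+\frac{\pi}{2}$ on $[-\pi,\pi]^2$, $u_\mu(x)=\int G(x,y)\,d\mu(y)$. For $g\in L^1[-\pi,\pi]$, the star function is $g^\star(t)=\sup\{\int_E g\,d\lambda: E\subset[-\pi,\pi]\text{ Borel},\ \lambda(E)=t\}$ for $t\in[0,2\pi]$. *)

theory Defs
  imports "HOL-Probability.Probability"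
begin

definition Gk :: "real \<Rightarrow> real \<Rightarrow> real" where
  "Gk x y = - (x * y) / (2 * pi) - \<bar>x - y\<bar> / 2 + pi / 2"

definition upot :: "real measure \<Rightarrow> real \<Rightarrow> real" where
  "upot \<mu> x = (\<integral>y. Gk x y \<partial>\<mu>)"

definition star_fun :: "(real \<Rightarrow> real) \<Rightarrow> real \<Rightarrow> real" where
  "star_fun g t = Sup {(LINT x:E|lborel. g x) | E. E \<in> sets borel \<and> E \<subseteq> {-pi..pi}
                        \<and> emeasure lborel E = ennreal t}"

definition singular_lebesgue :: "real measure \<Rightarrow> bool" where
  "singular_lebesgue \<sigma> \<longleftrightarrow> (\<exists>N \<in> sets borel. emeasure lborel N = 0 \<and> emeasure \<sigma> (UNIV - N) = 0)"

definition symmetrization :: "real measure \<Rightarrow> real measure" where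
  "symmetrization \<sigma> = scale_measure (emeasure \<sigma> {-pi<..<pi}) (return borel 0)"

end

theory Submission
  imports Defs
begin

lemma tri_integral:
  fixes k p q y :: real
  assumes k: "k \<ge> 0" and p: "p > 0" and q: "q > 0"
  defines "T \<equiv> \<lambda>x. max 0 (min (k + p*(x-y)) (k - q*(x-y)))"
  shows "integrable lborel T" "integral\<^sup>L lborel T = k^2/(2*p) + k^2/(2*q)"
proof -
  define a where "a = y - k/p"
  define b where "b = y + k/q"
  have ay: "a \<le> y" using k p by (simp add: a_def)
  have yb: "y \<le> b" using k q by (simp add: b_def)
  define f1 where "f1 = (\<lambda>x. indicator {a..y} x *\<^sub>R (k + p*(x-y)))"
  define f2 where "f2 = (\<lambda>x. indicator {y..b} x *\<^sub>R (k - q*(x-y)))"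
  have i1: "integrable lborel f1" unfolding f1_def
    by (intro borel_integrable_compact compact_Icc continuous_intros)
  have i2: "integrable lborel f2" unfolding f2_def
    by (intro borel_integrable_compact compact_Icc continuous_intros)
  have v1: "integral\<^sup>L lborel f1 = (k*y + p*(y-y)*(y-y)/2) - (k*a + p*(a-y)*(a-y)/2)"
    unfolding f1_def
    by (rule integral_FTC_atLeastAtMost[OF ay])
       (auto simp flip: has_real_derivative_iff_has_vector_derivative intro!: derivative_eq_intros continuous_intros simp: field_simps)
  have v2: "integral\<^sup>L lborel f2 = (k*b - q*(b-y)*(b-y)/2) - (k*y - q*(y-y)*(y-y)/2)"
    unfolding f2_def
    by (rule integral_FTC_atLeastAtMost[OF yb])
       (auto simp flip: has_real_derivative_iff_has_vector_derivative intro!: derivative_eq_intros continuous_intros simp: field_simps)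
  have eq: "T x = f1 x + f2 x" if "x \<noteq> y" for x
  proof (cases "x < y")
    case True
    have xy: "x - y < 0" using True by simp
    have n: "p*(x-y) < 0" "q*(x-y) < 0" using mult_pos_neg[OF p xy] mult_pos_neg[OF q xy] by auto
    have f2: "f2 x = 0" using True by (simp add: f2_def)
    have ax: "a \<le> x \<longleftrightarrow> 0 \<le> k + p*(x-y)" using p by (simp add: a_def field_simps)
    have f1: "f1 x = (if a \<le> x then k + p*(x-y) else 0)" using True by (simp add: f1_def)
    show ?thesis unfolding T_def f1 f2 using n ax by (smt (verit))
  next
    case False
    then have F: "x > y" using that by simp
    have xy: "x - y > 0" using F by simp
    have n: "p*(x-y) > 0" "q*(x-y) > 0" using mult_pos_pos[OF p xy] mult_pos_pos[OF q xy] by auto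
    have f1: "f1 x = 0" using F by (simp add: f1_def)
    have bx: "x \<le> b \<longleftrightarrow> 0 \<le> k - q*(x-y)" using q by (simp add: b_def field_simps)
    have f2: "f2 x = (if x \<le> b then k - q*(x-y) else 0)" using F by (simp add: f2_def)
    show ?thesis unfolding T_def f1 f2 using n bx by (smt (verit))
  qed
  have ae: "AE x in lborel. f1 x + f2 x = T x"
    using AE_lborel_singleton[of y] by eventually_elim (simp add: eq)
  have ii: "integrable lborel (\<lambda>x. f1 x + f2 x)" by (rule Bochner_Integration.integrable_add[OF i1 i2])
  have Tc: "continuous_on UNIV T" unfolding T_def by (intro continuous_intros)
  have Tm: "T \<in> borel_measurable lborel"
    using borel_measurable_continuous_onI[OF Tc] by simp
  have im: "(\<lambda>x. f1 x + f2 x) \<in> borel_measurable lborel" using ii by (rule borel_measurable_integrable)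
  show "integrable lborel T"
    using integrable_cong_AE[OF im Tm ae] ii by simp
  have "integral\<^sup>L lborel T = integral\<^sup>L lborel (\<lambda>x. f1 x + f2 x)"
    using integral_cong_AE[OF im Tm ae] by simp
  also have "\<dots> = integral\<^sup>L lborel f1 + integral\<^sup>L lborel f2" by (rule Bochner_Integration.integral_add[OF i1 i2])
  also have "integral\<^sup>L lborel f1 = k^2/(2*p)"
  proof -
    have "(k*y + p*(y-y)*(y-y)/2) - (k*a + p*(a-y)*(a-y)/2) = k*(k/p) - p*(k/p)*(k/p)/2"
      unfolding a_def by (simp add: algebra_simps)
    also have "\<dots> = k^2/(2*p)" using p by (simp add: field_simps power2_eq_square)
    finally show ?thesis using v1 by simp
  qed
  also have "integral\<^sup>L lborel f2 = k^2/(2*q)"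
  proof -
    have "(k*b - q*(b-y)*(b-y)/2) - (k*y - q*(y-y)*(y-y)/2) = k*(k/q) - q*(k/q)*(k/q)/2"
      unfolding b_def by (simp add: algebra_simps)
    also have "\<dots> = k^2/(2*q)" using q by (simp add: field_simps power2_eq_square)
    finally show ?thesis using v2 by simp
  qed
  finally show "integral\<^sup>L lborel T = k^2/(2*p) + k^2/(2*q)" .
qed

lemma arith_aux:
  fixes s h H :: real
  assumes "0 \<le> s" "s \<le> h" "h \<le> H"
  shows "(h-s)^2 * H \<le> (H-s)^2 * h"
proof -
  have e: "(H-s)^2*h - (h-s)^2*H = (H-h)*(h*H - s^2)" by (simp add: power2_eq_square algebra_simps)
  have "s * s \<le> h * H" using assms by (intro mult_mono) auto
  then have "0 \<le> (H-h)*(h*H - s^2)" using assms by (simp add: power2_eq_square)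
  with e show ?thesis by linarith
qed

lemma integrable_on_E:
  assumes "E \<in> sets borel" "E \<subseteq> {-pi..pi}" "continuous_on UNIV f"
  shows "integrable lborel (\<lambda>x. indicator E x * (f x :: real))"
proof -
  have "set_integrable lborel {-pi..pi} f"
    unfolding set_integrable_def
    by (intro borel_integrable_compact compact_Icc continuous_on_subset[OF assms(3)]) auto
  then have "set_integrable lborel E f"
    by (rule set_integrable_subset) (use assms in auto)
  then show ?thesis by (simp add: set_integrable_def)
qed

lemma Gk_cont: "continuous_on UNIV (\<lambda>x. Gk x y)"
  unfolding Gk_def by (intro continuous_intros) auto

lemma tent_bound:
  fixes y t :: real and E :: "real set"
  assumes y: "-pi < y" "y < pi" and E: "E \<in> sets borel" "E \<subseteq> {-pi..pi}"
    and Et: "emeasure lborel E = ennreal t" and t: "0 \<le> t" "t \<le> 2*pi"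
  shows "(LINT x:E|lborel. Gk x y) \<le> pi*t/2 - t^2/8"
proof -
  define s where "s = pi/2 - t/4"
  define h where "h = (pi^2 - y^2)/(2*pi)"
  define p where "p = (pi - y)/(2*pi)"
  define q where "q = (pi + y)/(2*pi)"
  define k where "k = max 0 (h - s)"
  define T where "T = (\<lambda>x. max 0 (min (k + p*(x-y)) (k - q*(x-y))))"
  have p0: "p > 0" using y by (simp add: p_def)
  have q0: "q > 0" using y by (simp add: q_def)
  have k0: "k \<ge> 0" by (simp add: k_def)
  have s0: "s \<ge> 0" using t by (simp add: s_def)
  have hH: "h \<le> pi/2" unfolding h_def using pi_gt_zero by (simp add: field_simps power2_eq_square)
  have hpos: "h > 0"
  proof -
    have "0 < (pi - y)*(pi + y)" using y by (intro mult_pos_pos) auto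
    then have "y^2 < pi^2" by (simp add: power2_eq_square algebra_simps)
    then show ?thesis unfolding h_def using pi_gt_zero by simp
  qed
  have Geq: "Gk x y = min (h + p*(x-y)) (h - q*(x-y))" for x
  proof (cases "x \<le> y")
    case True
    have n: "p*(x-y) \<le> 0" "q*(x-y) \<le> 0" using True p0 q0 by (simp_all add: mult_nonneg_nonpos)
    have "Gk x y = h + p*(x-y)" using True unfolding Gk_def h_def p_def
      by (simp add: field_simps power2_eq_square)
    then show ?thesis using n by simp
  next
    case False
    have n: "p*(x-y) \<ge> 0" "q*(x-y) \<ge> 0" using False p0 q0 by simp_all
    have "Gk x y = h - q*(x-y)" using False unfolding Gk_def h_def q_def
      by (simp add: field_simps power2_eq_square)
    then show ?thesis using n by simp
  qed
  have pt: "Gk x y \<le> s + T x" for x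
    unfolding Geq T_def k_def by linarith
  have Tnn: "T x \<ge> 0" for x unfolding T_def by simp
  have Tc: "continuous_on UNIV T" unfolding T_def by (intro continuous_intros)
  note tri = tri_integral[OF k0 p0 q0, of y, folded T_def]
  have iG: "integrable lborel (\<lambda>x. indicator E x * Gk x y)"
    by (rule integrable_on_E[OF E Gk_cont])
  have iT: "integrable lborel (\<lambda>x. indicator E x * T x)"
    by (rule integrable_on_E[OF E Tc])
  have iE: "integrable lborel (\<lambda>x. indicator E x :: real)"
    using E Et by (intro integrable_real_indicator) auto
  have mE: "measure lborel E = t" using Et t by (simp add: measure_def)
  have "(LINT x:E|lborel. Gk x y) = (\<integral>x. indicator E x * Gk x y \<partial>lborel)"
    by (simp add: set_lebesgue_integral_def)
  also have "\<dots> \<le> (\<integral>x. s * indicator E x + indicator E x * T x \<partial>lborel)"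
    using iG iE iT pt by (intro integral_mono) (auto simp: indicator_def algebra_simps)
  also have "\<dots> = s * t + (\<integral>x. indicator E x * T x \<partial>lborel)"
    using iE iT E mE by simp
  also have "(\<integral>x. indicator E x * T x \<partial>lborel) \<le> integral\<^sup>L lborel T"
    using iT tri(1) Tnn by (intro integral_mono) (auto simp: indicator_def)
  also have "integral\<^sup>L lborel T = k^2/(2*p) + k^2/(2*q)" by (rule tri(2))
  also have "s * t + (k^2/(2*p) + k^2/(2*q)) \<le> pi*t/2 - t^2/8"
  proof (cases "h \<le> s")
    case True
    then have "k = 0" by (simp add: k_def)
    then show ?thesis unfolding s_def by (simp add: power2_eq_square field_simps)
  next
    case False
    then have kk: "k = h - s" by (simp add: k_def)
    have ym: "pi - y > 0" "pi + y > 0" using y by auto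
    have a1: "k^2/(2*p) = k^2*pi/(pi-y)" unfolding p_def using ym by (simp add: field_simps)
    have a2: "k^2/(2*q) = k^2*pi/(pi+y)" unfolding q_def using ym by (simp add: field_simps)
    have hh: "h = ((pi-y)*(pi+y))/(2*pi)" unfolding h_def by (simp add: power2_eq_square algebra_simps)
    have a3: "k^2*pi/h = k^2*pi*(2*pi)/((pi-y)*(pi+y))" unfolding hh by simp
    have a4: "k^2*pi/(pi-y) + k^2*pi/(pi+y) = k^2*pi*(2*pi)/((pi-y)*(pi+y))"
      using ym by (simp add: field_simps)
    have sum: "k^2/(2*p) + k^2/(2*q) = k^2 * pi / h"
      unfolding a1 a2 a3 a4 ..
    have ar: "k^2 * (pi/2) \<le> (pi/2 - s)^2 * h"
      unfolding kk using arith_aux[OF s0 _ hH] False by simp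
    have "k^2 * pi / h \<le> 2 * (pi/2 - s)^2"
      using ar hpos by (simp add: field_simps)
    also have "2 * (pi/2 - s)^2 = t^2/8" unfolding s_def by (simp add: power2_eq_square field_simps)
    finally have X: "k^2 * pi / h \<le> t^2/8" .
    have "s*t = pi*t/2 - t^2/4" unfolding s_def by (simp add: field_simps power2_eq_square)
    then show ?thesis unfolding sum using X by linarith
  qed
  finally show ?thesis by simp
qed


lemma Gk_bound:
  assumes "\<bar>x\<bar> \<le> pi" "\<bar>y\<bar> \<le> pi"
  shows "\<bar>Gk x y\<bar> \<le> 2*pi"
proof -
  have "\<bar>x\<bar> * \<bar>y\<bar> \<le> pi * pi" using assms by (intro mult_mono) auto
  then have A0: "\<bar>x\<bar> * \<bar>y\<bar> / (2*pi) \<le> pi * pi / (2*pi)"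
    using pi_gt_zero by (intro divide_right_mono) auto
  have A1: "pi * pi / (2*pi) = pi/2" using pi_gt_zero by simp
  have A2: "\<bar>x*y/(2*pi)\<bar> = \<bar>x\<bar> * \<bar>y\<bar> / (2*pi)" using pi_gt_zero by (simp add: abs_mult)
  have A: "\<bar>x*y/(2*pi)\<bar> \<le> pi/2" using A0 unfolding A1 A2 .
  have D1: "x - y \<le> 2*pi" "y - x \<le> 2*pi" using assms by (simp_all add: abs_le_iff)
  have D: "\<bar>x - y\<bar> \<le> 2*pi" "0 \<le> \<bar>x - y\<bar>" using D1 by (simp_all add: abs_le_iff)
  have A': "x*y/(2*pi) \<le> pi/2" "-(x*y/(2*pi)) \<le> pi/2" using abs_le_D1[OF A] abs_le_D2[OF A] by simp_all
  have e: "- (x * y) / (2 * pi) = - (x*y/(2*pi))" by simp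
  have "\<bar>- (x * y) / (2 * pi) - \<bar>x - y\<bar> / 2 + pi / 2\<bar> \<le> 2*pi"
  proof -
    define a where "a = x*y/(2*pi)"
    define d where "d = \<bar>x - y\<bar>"
    have "\<bar>- a - d / 2 + pi / 2\<bar> \<le> 2*pi"
      using A' D pi_gt_zero unfolding a_def[symmetric] d_def[symmetric] by (intro abs_leI) linarith+
    then show ?thesis unfolding e a_def d_def .
  qed
  then show ?thesis by (simp add: Gk_def)
qed

lemma Gk_meas[measurable]: "(\<lambda>p. Gk (fst p) (snd p)) \<in> borel_measurable (borel \<Otimes>\<^sub>M borel)"
  unfolding Gk_def by measurable

lemma main_bound:
  fixes \<mu> :: "real measure" and E :: "real set" and t :: real
  assumes sets_eq: "sets \<mu> = sets borel" and fin: "finite_measure \<mu>"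
    and supp: "emeasure \<mu> (UNIV - {-pi<..<pi}) = 0"
    and E: "E \<in> sets borel" "E \<subseteq> {-pi..pi}"
    and Et: "emeasure lborel E = ennreal t" and t: "0 \<le> t" "t \<le> 2*pi"
  shows "(LINT x:E|lborel. upot \<mu> x) \<le> measure \<mu> {-pi<..<pi} * (pi*t/2 - t^2/8)"
proof -
  interpret finite_measure \<mu> by (rule fin)
  interpret P: pair_sigma_finite lborel \<mu>
    by (simp add: pair_sigma_finite_def sigma_finite_lborel sigma_finite_measure_axioms)
  define S where "S = {-pi<..<pi::real}"
  define B where "B = pi*t/2 - t^2/8"
  have sp: "space \<mu> = UNIV" using sets_eq_imp_space_eq[OF sets_eq] by simp
  note [measurable_cong] = sets_eq
  have Ssets[measurable]: "S \<in> sets borel" by (simp add: S_def)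
  have Emeas[measurable]: "E \<in> sets borel" by (rule E)
  have AES: "AE y in \<mu>. y \<in> S"
  proof (rule AE_I')
    show "UNIV - S \<in> null_sets \<mu>" using supp sets_eq by (auto simp: S_def null_sets_def)
  qed (auto simp: sp)
  have Gm[measurable]: "(\<lambda>y. Gk x y) \<in> borel_measurable borel" for x
    unfolding Gk_def by measurable
  have upot_eq: "upot \<mu> x = (\<integral>y. indicator S y * Gk x y \<partial>\<mu>)" for x
    unfolding upot_def
    by (rule integral_cong_AE) (use AES in \<open>auto simp: indicator_def\<close>)
  define f where "f = (\<lambda>x y. indicator E x * (indicator S y * Gk x y) :: real)"
  have fb: "\<bar>f x y\<bar> \<le> 2*pi" for x y
  proof (cases "x \<in> E \<and> y \<in> S")
    case True
    then have "x \<in> {-pi..pi}" "y \<in> S" using E(2) by blast+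
    then have "\<bar>x\<bar> \<le> pi" "\<bar>y\<bar> \<le> pi" by (auto simp: S_def)
    then have "\<bar>Gk x y\<bar> \<le> 2*pi" by (rule Gk_bound)
    moreover have "f x y = Gk x y" using True by (simp add: f_def)
    ultimately show ?thesis by simp
  next
    case False
    then show ?thesis by (auto simp: f_def)
  qed
  have fm[measurable]: "case_prod f \<in> borel_measurable (lborel \<Otimes>\<^sub>M \<mu>)"
  proof -
    have m: "case_prod f \<in> borel_measurable (borel \<Otimes>\<^sub>M borel)"
      unfolding f_def split_beta' by measurable
    have e: "sets (lborel \<Otimes>\<^sub>M \<mu>) = sets (borel \<Otimes>\<^sub>M borel)"
      by (rule sets_pair_measure_cong) (simp_all add: sets_eq)
    show ?thesis using m unfolding measurable_cong_sets[OF e refl] .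
  qed
  have fm2[measurable]: "(\<lambda>y. f x y) \<in> borel_measurable \<mu>" for x
    unfolding f_def by measurable
  have int2: "integrable \<mu> (\<lambda>y. f x y)" for x
    by (rule integrable_const_bound[where B="2*pi"]) (use fb in auto)
  have iE: "integrable lborel (\<lambda>x. indicator E x :: real)"
    using E Et by (intro integrable_real_indicator) auto
  have int_prod: "integrable (lborel \<Otimes>\<^sub>M \<mu>) (case_prod f)"
  proof (rule P.Fubini_integrable)
    show "integrable lborel (\<lambda>x. \<integral>y. norm (case_prod f (x, y)) \<partial>\<mu>)"
    proof (rule Bochner_Integration.integrable_bound)
      show "integrable lborel (\<lambda>x. indicator E x * (2*pi*measure \<mu> (space \<mu>)))"
        using iE by simp
      show "(\<lambda>x. \<integral>y. norm (case_prod f (x, y)) \<partial>\<mu>) \<in> borel_measurable lborel"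
        by measurable
      show "AE x in lborel. norm (\<integral>y. norm (case_prod f (x, y)) \<partial>\<mu>) \<le> norm (indicator E x * (2*pi*measure \<mu> (space \<mu>)))"
      proof (rule AE_I2)
        fix x
        show "norm (\<integral>y. norm (case_prod f (x, y)) \<partial>\<mu>) \<le> norm (indicator E x * (2*pi*measure \<mu> (space \<mu>)))"
        proof (cases "x \<in> E")
          case True
          have "(\<integral>y. norm (f x y) \<partial>\<mu>) \<le> (\<integral>y. 2*pi \<partial>\<mu>)"
            using int2 fb by (intro integral_mono) auto
          moreover have "0 \<le> (\<integral>y. norm (f x y) \<partial>\<mu>)" by simp
          ultimately show ?thesis using True pi_gt_zero by (simp add: mult_ac)
        next
          case False
          then show ?thesis by (simp add: f_def)
        qed
      qed
    qed
  qed (use int2 in auto)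
  note fub = P.Fubini_integral[OF int_prod]
  have "(LINT x:E|lborel. upot \<mu> x) = (\<integral>x. (\<integral>y. f x y \<partial>\<mu>) \<partial>lborel)"
    unfolding set_lebesgue_integral_def upot_eq f_def by simp
  also have "\<dots> = (\<integral>y. (\<integral>x. f x y \<partial>lborel) \<partial>\<mu>)" using fub by simp
  also have "\<dots> \<le> (\<integral>y. indicator S y * B \<partial>\<mu>)"
  proof (rule integral_mono)
    show "integrable \<mu> (\<lambda>y. \<integral>x. f x y \<partial>lborel)" by (rule P.integrable_snd[OF int_prod])
    show "integrable \<mu> (\<lambda>y. indicator S y * B)"
    proof -
      have fS: "emeasure \<mu> S < \<top>" by (simp add: less_top[symmetric])
      show ?thesis using Ssets sets_eq fS by (intro integrable_mult_left integrable_real_indicator) auto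
    qed
    fix y
    show "(\<integral>x. f x y \<partial>lborel) \<le> indicator S y * B"
    proof (cases "y \<in> S")
      case True
      have "(\<integral>x. f x y \<partial>lborel) = (LINT x:E|lborel. Gk x y)"
        using True by (simp add: f_def set_lebesgue_integral_def)
      also have "\<dots> \<le> B" unfolding B_def
        by (rule tent_bound) (use True E Et t in \<open>auto simp: S_def\<close>)
      finally show ?thesis using True by simp
    next
      case False
      then show ?thesis by (simp add: f_def)
    qed
  qed
  also have "\<dots> = measure \<mu> S * B" using sp by simp
  finally show ?thesis by (simp add: S_def B_def)
qed


lemma sym_density:
  assumes "0 \<le> mr"
  shows "scale_measure (ennreal mr) (return borel (0::real)) = density (return borel 0) (\<lambda>_. ennreal mr)"
proof (rule measure_eqI)
  show "sets (scale_measure (ennreal mr) (return borel (0::real))) = sets (density (return borel 0) (\<lambda>_. ennreal mr))"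
    by simp
  fix A assume "A \<in> sets (scale_measure (ennreal mr) (return borel (0::real)))"
  then have A: "A \<in> sets (return borel (0::real))" by simp
  show "emeasure (scale_measure (ennreal mr) (return borel (0::real))) A = emeasure (density (return borel 0) (\<lambda>_. ennreal mr)) A"
    using A by (simp add: emeasure_density_const)
qed

lemma upot_sym:
  assumes "0 \<le> mr"
  shows "upot (scale_measure (ennreal mr) (return borel (0::real))) x = mr * Gk x 0"
proof -
  have m0: "(\<lambda>y. Gk x y) \<in> borel_measurable borel"
    unfolding Gk_def by measurable
  have m: "(\<lambda>y. Gk x y) \<in> borel_measurable (return borel (0::real))"
    using m0 unfolding measurable_cong_sets[OF sets_return refl] .
  have "upot (scale_measure (ennreal mr) (return borel (0::real))) x
      = (\<integral>y. Gk x y \<partial>density (return borel 0) (\<lambda>_. ennreal mr))"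
    unfolding upot_def sym_density[OF assms] ..
  also have "\<dots> = (\<integral>y. mr *\<^sub>R Gk x y \<partial>return borel 0)"
    by (rule integral_density[where g="\<lambda>_. mr"]) (use m assms in auto)
  also have "\<dots> = mr * Gk x 0"
    by (subst integral_return) (use m in \<open>auto intro: borel_measurable_scaleR\<close>)
  finally show ?thesis .
qed

lemma sym_witness:
  assumes t: "0 \<le> t"
  shows "(\<integral>x. indicator {-t/2..t/2} x * Gk x 0 \<partial>lborel) = pi*t/2 - t^2/8"
proof -
  define s where "s = pi/2 - t/4"
  define k where "k = t/4"
  define T where "T = (\<lambda>x::real. max 0 (min (k + (1/2)*(x-0)) (k - (1/2)*(x-0))))"
  have k0: "k \<ge> 0" using t by (simp add: k_def)
  note tri = tri_integral[OF k0, of "1/2" "1/2" 0, folded T_def, simplified]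
  have G0: "Gk x 0 = pi/2 - \<bar>x\<bar>/2" for x unfolding Gk_def by simp
  have eq: "indicator {-t/2..t/2} x * Gk x 0 = s * indicator {-t/2..t/2} x + T x" for x
  proof (cases "x \<in> {-t/2..t/2}")
    case True
    then have x: "\<bar>x\<bar> \<le> t/2" by auto
    have m: "min (k + (1/2)*(x-0)) (k - (1/2)*(x-0)) = k - \<bar>x\<bar>/2" by (simp add: min_def abs_if)
    have T: "T x = k - \<bar>x\<bar>/2" unfolding T_def m using x by (simp add: k_def)
    show ?thesis using True unfolding T G0 s_def k_def by simp
  next
    case False
    then have x: "\<bar>x\<bar> > t/2" by auto
    have m: "min (k + (1/2)*(x-0)) (k - (1/2)*(x-0)) = k - \<bar>x\<bar>/2" by (simp add: min_def abs_if)
    have T: "T x = 0" unfolding T_def m using x by (simp add: k_def)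
    show ?thesis using False unfolding T by simp
  qed
  have iE: "integrable lborel (\<lambda>x. indicator {-t/2..t/2} x :: real)"
    using t by (intro integrable_real_indicator) auto
  have "(\<integral>x. indicator {-t/2..t/2} x * Gk x 0 \<partial>lborel) = (\<integral>x. s * indicator {-t/2..t/2} x + T x \<partial>lborel)"
    unfolding eq ..
  also have "\<dots> = s * t + (k^2 + k^2)"
    using iE tri t by simp
  also have "\<dots> = pi*t/2 - t^2/8" unfolding s_def k_def by (simp add: field_simps power2_eq_square)
  finally show ?thesis .
qed

theorem lemma5p6:
  fixes \<sigma> :: "real measure" and t :: real
  assumes "sets \<sigma> = sets borel"
    and "finite_measure \<sigma>"
    and "emeasure \<sigma> (UNIV - {-pi<..<pi}) = 0"
    and "singular_lebesgue \<sigma>"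
    and "t \<in> {0..2*pi}"
  shows "star_fun (upot \<sigma>) t \<le> star_fun (upot (symmetrization \<sigma>)) t"
proof -
  interpret finite_measure \<sigma> by fact
  define S where "S = {-pi<..<pi::real}"
  define mr where "mr = measure \<sigma> S"
  define B where "B = pi*t/2 - t^2/8"
  have t: "0 \<le> t" "t \<le> 2*pi" using assms(5) by auto
  have mr0: "0 \<le> mr" by (simp add: mr_def)
  have em: "emeasure \<sigma> S = ennreal mr"
    unfolding mr_def by (rule emeasure_eq_ennreal_measure) simp
  define \<tau> where "\<tau> = symmetrization \<sigma>"
  have tau: "\<tau> = scale_measure (ennreal mr) (return borel 0)"
    unfolding \<tau>_def symmetrization_def em[unfolded S_def] ..
  have tsets: "sets \<tau> = sets borel" by (simp add: tau)
  have tfin: "finite_measure \<tau>"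
  proof (rule finite_measureI)
    have "space \<tau> = UNIV" using sets_eq_imp_space_eq[OF tsets] by simp
    then show "emeasure \<tau> (space \<tau>) \<noteq> \<infinity>" by (simp add: tau)
  qed
  have tsupp: "emeasure \<tau> (UNIV - {-pi<..<pi}) = 0"
    using pi_gt_zero by (simp add: tau)
  have r1: "measure (return borel (0::real)) {-pi<..<pi} = 1"
    using pi_gt_zero by (simp add: measure_def)
  have tmeas: "measure \<tau> {-pi<..<pi} = mr"
    using r1 mr0 by (simp add: tau)
  define LA where "LA = {(LINT x:E|lborel. upot \<sigma> x) | E. E \<in> sets borel \<and> E \<subseteq> {-pi..pi}
                        \<and> emeasure lborel E = ennreal t}"
  define LB where "LB = {(LINT x:E|lborel. upot \<tau> x) | E. E \<in> sets borel \<and> E \<subseteq> {-pi..pi}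
                        \<and> emeasure lborel E = ennreal t}"
  have boundA: "a \<le> mr * B" if "a \<in> LA" for a
  proof -
    obtain E where E: "E \<in> sets borel" "E \<subseteq> {-pi..pi}" "emeasure lborel E = ennreal t"
      and a: "a = (LINT x:E|lborel. upot \<sigma> x)" using \<open>a \<in> LA\<close> unfolding LA_def by blast
    show ?thesis unfolding a mr_def S_def B_def
      by (rule main_bound[OF assms(1,2,3) E t])
  qed
  have boundB: "b \<le> mr * B" if "b \<in> LB" for b
  proof -
    obtain E where E: "E \<in> sets borel" "E \<subseteq> {-pi..pi}" "emeasure lborel E = ennreal t"
      and b: "b = (LINT x:E|lborel. upot \<tau> x)" using \<open>b \<in> LB\<close> unfolding LB_def by blast
    show ?thesis unfolding b B_def tmeas[symmetric]
      by (rule main_bound[OF tsets tfin tsupp E t])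
  qed
  have witB: "mr * B \<in> LB"
  proof -
    have sub: "{-t/2..t/2} \<subseteq> {-pi..pi}" using t by auto
    have me: "emeasure lborel {-t/2..t/2} = ennreal t" using t by simp
    have "(LINT x:{-t/2..t/2}|lborel. upot \<tau> x) = (\<integral>x. mr * (indicator {-t/2..t/2} x * Gk x 0) \<partial>lborel)"
      unfolding set_lebesgue_integral_def tau upot_sym[OF mr0] by (simp add: mult_ac)
    also have "\<dots> = mr * B" unfolding B_def using sym_witness[OF t(1)] by simp
    finally have X: "mr * B = (LINT x:{-t/2..t/2}|lborel. upot \<tau> x)" by simp
    show ?thesis unfolding LB_def
      by (intro CollectI exI[of _ "{-t/2..t/2}"]) (use sub me X in simp)
  qed
  have bddB: "bdd_above LB" by (rule bdd_aboveI[where M="mr * B"]) (rule boundB)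
  have neA: "LA \<noteq> {}"
  proof -
    have "emeasure lborel {-pi..-pi+t} = ennreal t" using t by simp
    moreover have "{-pi..-pi+t} \<subseteq> {-pi..pi}" using t by auto
    ultimately have "(LINT x:{-pi..-pi+t}|lborel. upot \<sigma> x) \<in> LA" unfolding LA_def
      by (intro CollectI exI[of _ "{-pi..-pi+t}"]) simp
    then show ?thesis by (rule ex_in_conv[THEN iffD1, OF exI])
  qed
  have "Sup LA \<le> Sup LB"
  proof (rule cSup_least[OF neA])
    fix a assume "a \<in> LA"
    then have "a \<le> mr * B" by (rule boundA)
    also have "\<dots> \<le> Sup LB" by (rule cSup_upper[OF witB bddB])
    finally show "a \<le> Sup LB" .
  qed
  then show ?thesis unfolding star_fun_def LA_def LB_def \<tau>_def .
qed

end
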